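(* Let $n\ge4$, let $d$ be a distance function on the edges of the complete graph $K_n$, and let $H$ be a Hamiltonian cycle of $K_n$. Then the probability that one application of the vertex-based random solution generation with the matrix $\Pi^H$ outputs a Hamiltonian cycle whose cost is at most the cost of $H$ is $\Omega(1)$.
   Context: The cost of a Hamiltonian cycle is the sum of $d$ over its edges. For a Hamiltonian cycle $H$, $\Pi^H=(\pi_{i,j})$ is the symmetric $n\times n$ matrix with $\pi_{i,i}=0$, $\pi_{i,j}=1-\frac1n$ if $\{i,j\}\in H$ and $\pi_{i,j}=\frac{1}{n(n-2)}$ otherwise. Vertex-based generation from $\Pi$: pick a start vertex uniformly at random; while unvisited vertices remain, from the current vertex $v$ move to an unvisited vertex $v'$ with probability $\pi_{v,v'}/\sum_{j\text{ unvisited}}\pi_{v,j}$; output the resulting Hamiltonian cycle. Asymptotics are as $n\to\infty$, uniformly in $H$ and $d$. *)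

theory Defs
  imports Complex_Main "HOL-Combinatorics.Multiset_Permutations"
begin

text \<open>Vertices of K_n are 0..<n; edges are two-element sets of vertices.
  A vertex ordering is a list xs with distinct entries and set xs = {0..<n}.\<close>

definition cycle_edges :: "nat list \<Rightarrow> nat set set" where
  "cycle_edges xs = {{xs ! i, xs ! ((i + 1) mod length xs)} | i. i < length xs}"

definition is_ham_cycle :: "nat \<Rightarrow> nat set set \<Rightarrow> bool" where
  "is_ham_cycle n H \<longleftrightarrow> (\<exists>xs \<in> permutations_of_set {0..<n}. H = cycle_edges xs)"

definition cost :: "(nat set \<Rightarrow> real) \<Rightarrow> nat set set \<Rightarrow> real" where
  "cost d H = (\<Sum>e\<in>H. d e)"

definition piH :: "nat \<Rightarrow> nat set set \<Rightarrow> nat \<Rightarrow> nat \<Rightarrow> real" where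
  "piH n H i j = (if i = j then 0
                  else if {i, j} \<in> H then 1 - 1 / real n
                  else 1 / (real n * (real n - 2)))"

text \<open>Probability that the vertex-based generation from the matrix P visits the
  vertices in the order xs: uniform start, then at step k move from xs!k to
  xs!(k+1) with probability P(xs!k, xs!(k+1)) / sum over unvisited j of P(xs!k, j).\<close>
definition seq_prob :: "nat \<Rightarrow> (nat \<Rightarrow> nat \<Rightarrow> real) \<Rightarrow> nat list \<Rightarrow> real" where
  "seq_prob n P xs = (1 / real n) *
     (\<Prod>k<n - 1. P (xs ! k) (xs ! (k + 1)) /
        (\<Sum>j\<in>{0..<n} - set (take (k + 1) xs). P (xs ! k) j))"

definition prob_cost_le :: "nat \<Rightarrow> (nat \<Rightarrow> nat \<Rightarrow> real) \<Rightarrow> (nat set \<Rightarrow> real) \<Rightarrow> real \<Rightarrow> real" where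
  "prob_cost_le n P d C =
     (\<Sum>xs \<in> {xs \<in> permutations_of_set {0..<n}. cost d (cycle_edges xs) \<le> C}. seq_prob n P xs)"

end

theory Submission
  imports Defs
begin

lemma cycle_edges_range:
  assumes "length xs > 0"
  shows "cycle_edges xs = range (\<lambda>i. {xs ! (i mod length xs), xs ! ((i + 1) mod length xs)})"
proof
  show "cycle_edges xs \<subseteq> range (\<lambda>i. {xs ! (i mod length xs), xs ! ((i + 1) mod length xs)})"
    unfolding cycle_edges_def by (auto intro!: image_eqI)
  show "range (\<lambda>i. {xs ! (i mod length xs), xs ! ((i + 1) mod length xs)}) \<subseteq> cycle_edges xs"
  proof
    fix e assume "e \<in> range (\<lambda>i. {xs ! (i mod length xs), xs ! ((i + 1) mod length xs)})"
    then obtain i where e: "e = {xs ! (i mod length xs), xs ! ((i + 1) mod length xs)}" by auto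
    have "(i mod length xs + 1) mod length xs = (i + 1) mod length xs"
      by (simp add: mod_Suc_eq)
    then show "e \<in> cycle_edges xs" unfolding cycle_edges_def e
      using assms by (auto intro!: exI[of _ "i mod length xs"])
  qed
qed

lemma cycle_edges_rotate:
  assumes "length xs > 0"
  shows "cycle_edges (rotate r xs) = cycle_edges xs"
proof -
  let ?L = "length xs"
  let ?f = "\<lambda>i. {xs ! (i mod ?L), xs ! ((i + 1) mod ?L)}"
  have rot: "rotate r xs ! (i mod ?L) = xs ! ((r + i) mod ?L)" for i
    using assms by (simp add: nth_rotate mod_add_right_eq)
  have "cycle_edges (rotate r xs) = range (\<lambda>i. ?f (r + i))"
    using assms by (simp add: cycle_edges_range rot add.assoc)
  also have "\<dots> = range ?f"
  proof
    show "range (\<lambda>i. ?f (r + i)) \<subseteq> range ?f" by auto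
    show "range ?f \<subseteq> range (\<lambda>i. ?f (r + i))"
    proof
      fix e assume "e \<in> range ?f"
      then obtain j where e: "e = ?f j" by auto
      have "r \<le> ?L * r" using assms by (simp add: Suc_le_eq)
      then have "r \<le> j + ?L * r" by (rule trans_le_add2)
      then have eq: "r + (j + ?L * r - r) = j + ?L * r" by (rule le_add_diff_inverse)
      have "?f (r + (j + ?L * r - r)) = ?f j"
      proof -
        have m1: "(j + ?L * r) mod ?L = j mod ?L" by (rule mod_mult_self2)
        have "(j + ?L * r + 1) = (j + 1) + ?L * r" by simp
        then have m2: "(j + ?L * r + 1) mod ?L = (j + 1) mod ?L" by (simp only: mod_mult_self2)
        show ?thesis unfolding eq m1 m2 ..
      qed
      then show "e \<in> range (\<lambda>i. ?f (r + i))" using e by (intro image_eqI[where x="j + ?L * r - r"]) simp_all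
    qed
  qed
  also have "\<dots> = cycle_edges xs" using assms by (simp add: cycle_edges_range)
  finally show ?thesis .
qed

lemma edge_adjacent:
  assumes "distinct xs" "a < length xs" "b < length xs"
    "{xs ! a, xs ! b} \<in> cycle_edges xs" "a \<noteq> b"
  shows "b = (a + 1) mod length xs \<or> a = (b + 1) mod length xs"
proof -
  obtain i where i: "i < length xs" "{xs ! a, xs ! b} = {xs ! i, xs ! ((i + 1) mod length xs)}"
    using assms(4) unfolding cycle_edges_def by auto
  have m: "(i + 1) mod length xs < length xs" using i(1) by (intro mod_less_divisor) auto
  have "xs ! a \<noteq> xs ! b" using assms nth_eq_iff_index_eq by blast
  from i(2) have "(xs ! a = xs ! i \<and> xs ! b = xs ! ((i + 1) mod length xs)) \<or>
                  (xs ! b = xs ! i \<and> xs ! a = xs ! ((i + 1) mod length xs))"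
    by (auto simp: doubleton_eq_iff)
  then show ?thesis using assms(1,2,3) i(1) m nth_eq_iff_index_eq by metis
qed


lemma exp_bound:
  assumes "n \<ge> (2::nat)"
  shows "exp (-1) \<le> (1 - 1 / real n) ^ (n - 1)"
proof -
  define m where "m = n - 1"
  have m1: "m \<ge> 1" and nm: "real n = real m + 1" using assms unfolding m_def by auto
  have pos: "real m > 0" using m1 by simp
  have "(1 + 1 / real m) ^ m \<le> exp (1 / real m) ^ m"
    by (rule power_mono) (use exp_ge_add_one_self[of "1 / real m"] in \<open>auto simp: add.commute\<close>)
  also have "\<dots> = exp (real m * (1 / real m))" by (rule exp_of_nat_mult[symmetric])
  also have "\<dots> = exp 1" using pos by simp
  finally have A: "(1 + 1 / real m) ^ m \<le> exp 1" .
  have B: "(1 - 1 / real n) = inverse (1 + 1 / real m)"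
    using pos unfolding nm by (simp add: field_simps)
  have "exp (-1) = inverse (exp (1::real))" using exp_minus[of "1::real"] by simp
  also have "\<dots> \<le> inverse ((1 + 1 / real m) ^ m)"
    using A pos by (intro le_imp_inverse_le zero_less_power) (auto intro: add_pos_pos)
  also have "\<dots> = (1 - 1 / real n) ^ (n - 1)"
    unfolding B m_def[symmetric] by (simp add: power_inverse)
  finally show ?thesis .
qed

lemma piH_nonneg:
  assumes "n \<ge> 4"
  shows "piH n H i j \<ge> 0"
proof -
  have "real n \<ge> 4" using assms by simp
  then have "1 / real n \<le> 1" "real n * (real n - 2) > 0" by auto
  then show ?thesis unfolding piH_def by auto
qed

lemma seq_prob_nonneg:
  assumes "n \<ge> 4"
  shows "seq_prob n (piH n H) ys \<ge> 0"
  unfolding seq_prob_def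
  using piH_nonneg[OF assms]
  by (intro mult_nonneg_nonneg prod_nonneg divide_nonneg_nonneg sum_nonneg) auto

lemma in_take_iff:
  assumes "distinct xs" "i < length xs"
  shows "xs ! i \<in> set (take m xs) \<longleftrightarrow> i < m"
proof
  assume "xs ! i \<in> set (take m xs)"
  then obtain j where j: "j < length (take m xs)" "take m xs ! j = xs ! i"
    by (auto simp: in_set_conv_nth)
  then have "xs ! j = xs ! i" "j < length xs" "j < m" by auto
  then show "i < m" using assms nth_eq_iff_index_eq by metis
next
  assume "i < m"
  then show "xs ! i \<in> set (take m xs)" using assms
    by (auto simp: in_set_conv_nth intro!: exI[of _ i])
qed


lemma seq_prob_lower:
  assumes n4: "n \<ge> 4" and xs: "xs \<in> permutations_of_set {0..<n}"
    and H: "H = cycle_edges xs"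
  shows "seq_prob n (piH n H) xs \<ge> exp (-1) / (2 * real n)"
proof -
  let ?P = "piH n H"
  let ?a = "1 - 1 / real n"
  let ?b = "1 / (real n * (real n - 2))"
  have dist: "distinct xs" and setxs: "set xs = {0..<n}" using xs
    by (auto simp: permutations_of_set_def)
  have len: "length xs = n" using distinct_card[OF dist] setxs by simp
  have rn: "real n \<ge> 4" using n4 by simp
  have apos: "?a > 0" using rn by simp
  have bpos: "?b > 0" using rn by simp
  have nb: "real (n - 2) * ?b = 1 / real n" using rn by (simp add: of_nat_diff field_simps)
  define U where "U k = {0..<n} - set (take (k + 1) xs)" for k
  define D where "D k = (\<Sum>j\<in>U k. ?P (xs ! k) j)" for k
  have edge: "?P (xs ! k) (xs ! (k + 1)) = ?a" if k: "k < n - 1" for k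
  proof -
    have "{xs ! k, xs ! (k + 1)} \<in> H" unfolding H cycle_edges_def len
      using k by (auto intro!: exI[of _ k])
    moreover have "xs ! k \<noteq> xs ! (k + 1)" using nth_eq_iff_index_eq[OF dist, of k "k+1"] k len by simp
    ultimately show ?thesis unfolding piH_def by simp
  qed
  have other: "?P (xs ! k) j \<le> ?b + (if j = xs ! (n - 1) then (if k = 0 then ?a else 0) else 0)"
    if k: "k < n - 1" and j: "j \<in> U k - {xs ! (k + 1)}" for k j
  proof -
    from j have "j \<in> set xs" unfolding U_def setxs by auto
    then obtain b where b: "b < n" "j = xs ! b" using len by (auto simp: in_set_conv_nth)
    have "\<not> b < k + 1" using j b in_take_iff[OF dist, of b "k+1"] len unfolding U_def by auto
    then have bk: "b > k" by simp
    have "b \<noteq> k + 1" using j b by auto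
    show ?thesis
    proof (cases "{xs ! k, xs ! b} \<in> H")
      case True
      have "b = (k + 1) mod n \<or> k = (b + 1) mod n"
        using edge_adjacent[OF dist, of k b] True H len b bk k by auto
      moreover have "(k + 1) mod n = k + 1" using k by simp
      ultimately have "k = (b + 1) mod n" using \<open>b \<noteq> k + 1\<close> by auto
      then have "k = 0 \<and> b = n - 1"
      proof (cases "b + 1 < n")
        case True
        then have "(b + 1) mod n = b + 1" by simp
        then show ?thesis using \<open>k = (b + 1) mod n\<close> bk by simp
      next
        case False
        then have "b + 1 = n" using b by simp
        then show ?thesis using \<open>k = (b + 1) mod n\<close> by simp
      qed
      then show ?thesis unfolding piH_def using bpos apos b by auto
    next
      case False
      then show ?thesis unfolding piH_def using bpos apos b by auto
    qed
  qed
  have Dbound: "D k \<le> (if k = 0 then 2 else 1)" and Dpos: "D k \<ge> ?a" if k: "k < n - 1" for k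
  proof -
    have fin: "finite (U k)" unfolding U_def by simp
    have mem: "xs ! (k + 1) \<in> U k" unfolding U_def
      using in_take_iff[OF dist, of "k+1" "k+1"] k len nth_mem[of "k+1" xs] setxs by auto
    have D_split: "D k = ?a + (\<Sum>j\<in>U k - {xs ! (k + 1)}. ?P (xs ! k) j)"
      unfolding D_def using sum.remove[OF fin mem, of "?P (xs ! k)"] edge[OF k] by simp
    have sub: "U k - {xs ! (k + 1)} \<subseteq> {0..<n} - {xs ! k, xs ! (k + 1)}"
      proof -
      have "xs ! k \<in> set (take (k + 1) xs)"
        using in_take_iff[OF dist, of k "k+1"] k len by simp
      then show ?thesis unfolding U_def by auto
    qed
    have "card (U k - {xs ! (k + 1)}) \<le> card ({0..<n} - {xs ! k, xs ! (k + 1)})"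
      by (rule card_mono[OF _ sub]) simp
    also have "\<dots> = n - 2"
    proof -
      have "xs ! k \<in> {0..<n}" "xs ! (k+1) \<in> {0..<n}" using setxs len k
        using nth_mem[of k xs] nth_mem[of "k+1" xs] by auto
      moreover have "xs ! k \<noteq> xs ! (k + 1)" using nth_eq_iff_index_eq[OF dist, of k "k+1"] k len by simp
      ultimately show ?thesis by (simp add: card_Diff_subset)
    qed
    finally have cardle: "card (U k - {xs ! (k + 1)}) \<le> n - 2" .
    have "(\<Sum>j\<in>U k - {xs ! (k + 1)}. ?P (xs ! k) j)
        \<le> (\<Sum>j\<in>U k - {xs ! (k + 1)}. ?b + (if j = xs ! (n - 1) then (if k = 0 then ?a else 0) else 0))"
      using other[OF k] by (intro sum_mono) auto
    also have "\<dots> = real (card (U k - {xs ! (k + 1)})) * ?b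
        + (if xs ! (n - 1) \<in> U k - {xs ! (k + 1)} then (if k = 0 then ?a else 0) else 0)"
      using fin by (simp add: sum.distrib sum.delta)
    also have "\<dots> \<le> real (n - 2) * ?b + (if k = 0 then ?a else 0)"
      using cardle bpos apos by (intro add_mono mult_right_mono) auto
    finally have S: "(\<Sum>j\<in>U k - {xs ! (k + 1)}. ?P (xs ! k) j) \<le> 1 / real n + (if k = 0 then ?a else 0)"
      using nb by simp
    have i1: "1 / real n \<le> 1" "0 \<le> 1 / real n" using rn by simp_all
    show "D k \<le> (if k = 0 then 2 else 1)"
    proof (cases "k = 0")
      case True
      with S i1 show ?thesis unfolding D_split by (smt (verit))
    next
      case False
      with S i1 show ?thesis unfolding D_split by simp
    qed
    have "(\<Sum>j\<in>U k - {xs ! (k + 1)}. ?P (xs ! k) j) \<ge> 0"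
      using piH_nonneg[OF n4] by (intro sum_nonneg) auto
    then show "D k \<ge> ?a" unfolding D_split by simp
  qed
  have fac: "?P (xs ! k) (xs ! (k + 1)) / D k \<ge> ?a * (if k = 0 then 1/2 else 1)"
    if k: "k < n - 1" for k
  proof -
    have "?a / (if k = 0 then 2 else 1) \<le> ?a / D k"
      using Dbound[OF k] Dpos[OF k] apos by (intro divide_left_mono) auto
    then show ?thesis using edge[OF k] by (cases "k = 0") auto
  qed
  have "(\<Prod>k<n - 1. ?a * (if k = 0 then 1/2 else 1))
        \<le> (\<Prod>k<n - 1. ?P (xs ! k) (xs ! (k + 1)) / D k)"
    using fac apos by (intro prod_mono) auto
  moreover have "(\<Prod>k<n - 1. ?a * (if k = 0 then 1/2 else 1)) = ?a ^ (n - 1) / 2"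
    using n4 by (simp add: prod.distrib prod.delta)
  ultimately have "?a ^ (n - 1) / 2 \<le> (\<Prod>k<n - 1. ?P (xs ! k) (xs ! (k + 1)) / D k)" by simp
  moreover have "exp (-1) \<le> ?a ^ (n - 1)" using exp_bound n4 by simp
  ultimately have "exp (-1) / 2 \<le> (\<Prod>k<n - 1. ?P (xs ! k) (xs ! (k + 1)) / D k)" by simp
  then have "(1 / real n) * (exp (-1) / 2) \<le> (1 / real n) * (\<Prod>k<n - 1. ?P (xs ! k) (xs ! (k + 1)) / D k)"
    using rn by (intro mult_left_mono) auto
  moreover have "seq_prob n ?P xs = (1 / real n) * (\<Prod>k<n - 1. ?P (xs ! k) (xs ! (k + 1)) / D k)"
    unfolding seq_prob_def D_def U_def by (rule refl)
  moreover have "(1 / real n) * (exp (-1) / 2) = exp (-1) / (2 * real n)" by simp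
  ultimately show ?thesis by simp
qed


theorem claim2:
  shows "\<exists>c > 0. \<exists>N. \<forall>n \<ge> N. \<forall>(d :: nat set \<Rightarrow> real) H.
           n \<ge> 4 \<longrightarrow> (\<forall>e. d e \<ge> 0) \<longrightarrow> is_ham_cycle n H \<longrightarrow>
           prob_cost_le n (piH n H) d (cost d H) \<ge> c"
proof (intro exI[of _ "exp (-1) / 2"] conjI exI[of _ 4] allI impI)
  show "(0::real) < exp (-1) / 2" by simp
  fix n :: nat and d :: "nat set \<Rightarrow> real" and H
  assume n4: "n \<ge> 4" and "\<forall>e. d e \<ge> 0" and ham: "is_ham_cycle n H"
  obtain ys where ys: "ys \<in> permutations_of_set {0..<n}" and H: "H = cycle_edges ys"
    using ham unfolding is_ham_cycle_def by auto
  have dist: "distinct ys" and setys: "set ys = {0..<n}" using ys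
    by (auto simp: permutations_of_set_def)
  have len: "length ys = n" using distinct_card[OF dist] setys by simp
  have lpos: "length ys > 0" using len n4 by simp
  let ?S = "{xs \<in> permutations_of_set {0..<n}. cost d (cycle_edges xs) \<le> cost d H}"
  let ?R = "(\<lambda>r. rotate r ys) ` {0..<n}"
  have rot_perm: "rotate r ys \<in> permutations_of_set {0..<n}" for r
    using dist setys by (simp add: permutations_of_set_def)
  have rot_H: "cycle_edges (rotate r ys) = H" for r
    using cycle_edges_rotate[OF lpos] H by simp
  have sub: "?R \<subseteq> ?S" using rot_perm rot_H by auto
  have inj: "inj_on (\<lambda>r. rotate r ys) {0..<n}"
  proof
    fix r s assume r: "r \<in> {0..<n}" and s: "s \<in> {0..<n}" and eq: "rotate r ys = rotate s ys"
    have "rotate r ys ! 0 = rotate s ys ! 0" using eq by simp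
    then have "ys ! r = ys ! s" using lpos r s len by (simp add: nth_rotate)
    then show "r = s" using nth_eq_iff_index_eq[OF dist] r s len by auto
  qed
  have "(\<Sum>xs\<in>?R. seq_prob n (piH n H) xs) \<le> prob_cost_le n (piH n H) d (cost d H)"
    unfolding prob_cost_le_def
    using sub seq_prob_nonneg[OF n4] by (intro sum_mono2) (auto simp: finite_permutations_of_set)
  moreover have "(\<Sum>xs\<in>?R. seq_prob n (piH n H) xs) = (\<Sum>r\<in>{0..<n}. seq_prob n (piH n H) (rotate r ys))"
    using inj by (simp add: sum.reindex)
  moreover have "(\<Sum>r\<in>{0..<n}. exp (-1) / (2 * real n)) \<le> (\<Sum>r\<in>{0..<n}. seq_prob n (piH n H) (rotate r ys))"
  proof (rule sum_mono)
    fix r assume "r \<in> {0..<n}"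
    show "exp (-1) / (2 * real n) \<le> seq_prob n (piH n H) (rotate r ys)"
      using seq_prob_lower[OF n4 rot_perm[of r] rot_H[of r, symmetric]] by simp
  qed
  moreover have "(\<Sum>r\<in>{0..<n}. exp (-1) / (2 * real n)) = exp (-1) / 2"
    using n4 by simp
  ultimately show "exp (-1) / 2 \<le> prob_cost_le n (piH n H) d (cost d H)" by linarith
qed

end
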